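(* Let $(g_i)_{i \geq 1}$ be i.i.d. centered normal random variables, and for each $d \geq 1$ let $\boldsymbol{w}^{(d)} = (g_1,\dots,g_d)/\|(g_1,\dots,g_d)\|_2$, so that $\boldsymbol{w}^{(d)}$ is uniformly distributed on the unit $\ell_2$-sphere of $\mathbb{R}^d$. For every $p \in (1,\infty]$, with $p' \in [1,\infty)$ defined by $\frac1p + \frac1{p'} = 1$, as $d \to \infty$, \[ \frac{d^{1/p}\,\frac{\|\boldsymbol{w}^{(d)}\|_{p'}}{\|\boldsymbol{w}^{(d)}\|_2}}{\sqrt{d}} \longrightarrow \sqrt{2}\left(\frac{\Gamma\left(\frac{2p-1}{2(p-1)}\right)}{\sqrt{\pi}}\right)^{1-\frac{1}{p}} \quad \text{almost surely} \] (for $p = \infty$ the right-hand side is read as $\sqrt{2}\,\Gamma(1)/\sqrt{\pi}$). Moreover, for $p = 1$, \[ \frac{d\,\frac{\|\boldsymbol{w}^{(d)}\|_{\infty}}{\|\boldsymbol{w}^{(d)}\|_2}}{\sqrt{2 d \ln d}} \longrightarrow 1 \quad \text{almost surely}. \]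
   Context: $\Gamma$ is the Gamma function; $\|\cdot\|_q$ is the $\ell_q$ norm on $\mathbb{R}^d$. *)

theory Defs
  imports "HOL-Probability.Probability"
begin

definition lq_norm :: "real \<Rightarrow> nat \<Rightarrow> (nat \<Rightarrow> real) \<Rightarrow> real" where
  "lq_norm q d x = (\<Sum>i=1..d. \<bar>x i\<bar> powr q) powr (1 / q)"

definition linf_norm :: "nat \<Rightarrow> (nat \<Rightarrow> real) \<Rightarrow> real" where
  "linf_norm d x = Max ((\<lambda>i. \<bar>x i\<bar>) ` {1..d})"

definition unit_dir :: "nat \<Rightarrow> (nat \<Rightarrow> real) \<Rightarrow> (nat \<Rightarrow> real)" where
  "unit_dir d x = (\<lambda>i. x i / lq_norm 2 d x)"

end

theory Submission
  imports Defs
begin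

lemma subst_step:
  fixes s q :: real
  assumes s: "s > 0" and q: "q > 0"
  defines "f \<equiv> (\<lambda>x::real. x powr q * exp (- (x\<^sup>2) / (2 * s\<^sup>2)))"
  defines "G \<equiv> (\<lambda>t::real. s * sqrt (2 * t))"
  defines "G' \<equiv> (\<lambda>t::real. s / sqrt (2 * t))"
  assumes int: "set_integrable lborel (einterval 0 \<infinity>) (\<lambda>x. f (G x) * G' x)"
  shows "set_integrable lborel (einterval 0 \<infinity>) f"
    "(LBINT x=0..\<infinity>. f x) = (LBINT x=0..\<infinity>. f (G x) * G' x)"
proof -
  have d: "DERIV G x :> G' x" if "0 < x" for x
    unfolding G_def G'_def using that
    by (auto intro!: derivative_eq_intros simp: field_simps real_sqrt_mult)
  have cf: "isCont f (G x)" if "0 < x" for x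
  proof -
    have "G x > 0" using that s by (simp add: G_def)
    then show ?thesis unfolding f_def using s by (auto intro!: continuous_intros)
  qed
  have cg: "isCont G' x" if "0 < x" for x
    unfolding G'_def using that by (auto intro!: continuous_intros)
  have A: "((ereal \<circ> G \<circ> real_of_ereal) \<longlongrightarrow> ereal 0) (at_right (ereal 0))"
  proof -
    have "(G \<longlongrightarrow> G 0) (at_right 0)"
      unfolding G_def by (intro tendsto_intros continuous_on_tendsto_compose) auto
    then show ?thesis
      by (simp add: ereal_tendsto_simps1 ereal_tendsto_simps2 o_assoc[symmetric] G_def)
  qed
  have B: "((ereal \<circ> G \<circ> real_of_ereal) \<longlongrightarrow> \<infinity>) (at_left \<infinity>)"
  proof -
    have "filterlim G at_top at_top"
      unfolding G_def using s
      by (intro filterlim_tendsto_pos_mult_at_top[OF tendsto_const s]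
            filterlim_compose[OF sqrt_at_top] filterlim_tendsto_pos_mult_at_top[OF tendsto_const] filterlim_ident) auto
    then have "((ereal \<circ> G) \<longlongrightarrow> \<infinity>) at_top" by (simp add: ereal_tendsto_simps2)
    then show ?thesis
      by (simp add: at_left_PInf filterlim_filtermap o_def)
  qed
  note main = interval_integral_substitution_nonneg[of 0 \<infinity> G G' f 0 \<infinity>]
  have hyps: "\<And>x. 0 < ereal x \<Longrightarrow> 0 \<le> f (G x)" "\<And>x. 0 \<le> ereal x \<Longrightarrow> 0 \<le> G' x"
    using s by (auto simp: f_def G_def G'_def)
  show "set_integrable lborel (einterval 0 \<infinity>) f"
    using main(1)[OF _ d cf cg hyps _ _ int] A B by (auto simp: zero_ereal_def)
  show "(LBINT x=0..\<infinity>. f x) = (LBINT x=0..\<infinity>. f (G x) * G' x)"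
    using main(2)[OF _ d cf cg hyps _ _ int] A B by (auto simp: zero_ereal_def)
qed


lemma gamma_set_integrable:
  assumes "a > 0"
  shows "set_integrable lborel {0<..} (\<lambda>t::real. t powr (a - 1) / exp t)"
    and "(LBINT t:{0<..}. t powr (a - 1) / exp t) = Gamma a"
proof -
  have nn: "Gamma a = nn_integral lborel (\<lambda>t. ennreal (indicator {0..} t * t powr (a - 1) / exp t))"
    by (rule Gamma_conv_nn_integral_real[OF assms])
  have eq: "(\<lambda>t. ennreal (indicator {0..} t * t powr (a - 1) / exp t)) =
            (\<lambda>t. ennreal (indicator {0<..} t * (t powr (a - 1) / exp t)))"
    by (auto simp: indicator_def fun_eq_iff)
  have hb: "has_bochner_integral lborel (\<lambda>t. indicator {0<..} t * (t powr (a - 1) / exp t)) (Gamma a)"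
    by (rule has_bochner_integral_nn_integral) (use nn eq Gamma_real_pos[OF assms] in \<open>auto simp: indicator_def\<close>)
  show "set_integrable lborel {0<..} (\<lambda>t::real. t powr (a - 1) / exp t)"
    using hb unfolding set_integrable_def by (auto simp: has_bochner_integral_iff)
  show "(LBINT t:{0<..}. t powr (a - 1) / exp t) = Gamma a"
    using hb unfolding set_lebesgue_integral_def by (auto simp: has_bochner_integral_iff)
qed


lemma einterval_0_inf: "einterval 0 \<infinity> = {0::real<..}"
  by (auto simp: einterval_def zero_ereal_def)

lemma half_moment:
  fixes s q :: real
  assumes s: "s > 0" and q: "q > 0"
  shows "set_integrable lborel {0<..} (\<lambda>x::real. x powr q * exp (- (x\<^sup>2) / (2 * s\<^sup>2)))"
    "(LBINT x:{0<..}. x powr q * exp (- (x\<^sup>2) / (2 * s\<^sup>2))) =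
       s powr (q + 1) * 2 powr ((q - 1) / 2) * Gamma ((q + 1) / 2)"
proof -
  define f where "f = (\<lambda>x::real. x powr q * exp (- (x\<^sup>2) / (2 * s\<^sup>2)))"
  define G where "G = (\<lambda>t::real. s * sqrt (2 * t))"
  define G' where "G' = (\<lambda>t::real. s / sqrt (2 * t))"
  define C1 where "C1 = s powr (q + 1) * 2 powr ((q - 1) / 2)"
  have a: "(q + 1) / 2 > 0" using q by simp
  have pt: "f (G t) * G' t = C1 * (t powr ((q + 1) / 2 - 1) / exp t)" if "t > 0" for t
  proof -
    have G2: "(G t)\<^sup>2 = s\<^sup>2 * (2 * t)" using that s by (simp add: G_def power_mult_distrib)
    have e: "exp (- ((G t)\<^sup>2) / (2 * s\<^sup>2)) = 1 / exp t"
      using s by (simp add: G2 exp_minus inverse_eq_divide)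
    have "G t = s * (2 * t) powr (1/2)" using that by (simp add: G_def powr_half_sqrt)
    then have "G t powr q = s powr q * ((2 * t) powr (1/2)) powr q"
      using that s by (simp add: powr_mult)
    also have "((2 * t) powr (1/2)) powr q = (2 * t) powr (q / 2)"
      by (simp add: powr_powr)
    finally have "G t powr q = s powr q * (2 * t) powr (q / 2)" .
    moreover have "G' t = s / (2 * t) powr (1/2)"
      using that by (simp add: G'_def powr_half_sqrt)
    ultimately have "f (G t) * G' t = s powr q * s * ((2 * t) powr (q / 2) / (2 * t) powr (1/2)) / exp t"
      using e by (simp add: f_def mult_ac)
    also have "(2 * t) powr (q / 2) / (2 * t) powr (1/2) = (2 * t) powr (q / 2 - 1/2)"
      by (rule powr_diff[symmetric])
    also have "q / 2 - 1/2 = (q + 1) / 2 - 1" by (simp add: field_simps)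
    also have "(2 * t) powr ((q + 1) / 2 - 1) = 2 powr ((q + 1) / 2 - 1) * t powr ((q + 1) / 2 - 1)"
      using that by (simp add: powr_mult)
    also have "s powr q * s = s powr (q + 1)" using s by (simp add: powr_add)
    finally have fin: "f (G t) * G' t = s powr (q + 1) * (2 powr ((q + 1) / 2 - 1) * t powr ((q + 1) / 2 - 1)) / exp t" .
    have qq: "(q + 1) / 2 - 1 = (q - 1) / 2" by (simp add: field_simps)
    show ?thesis unfolding C1_def fin by (simp only: qq mult_ac times_divide_eq_right)
  qed
  have gi: "set_integrable lborel {0<..} (\<lambda>t::real. t powr ((q + 1) / 2 - 1) / exp t)"
    and gv: "(LBINT t:{0<..}. t powr ((q + 1) / 2 - 1) / exp t) = Gamma ((q + 1) / 2)"
    using gamma_set_integrable[OF a] by auto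
  have int: "set_integrable lborel (einterval 0 \<infinity>) (\<lambda>x. f (G x) * G' x)"
    unfolding einterval_0_inf set_integrable_def
  proof (rule Bochner_Integration.integrable_cong[THEN iffD2, OF refl])
    show "indicator {0<..} x *\<^sub>R (f (G x) * G' x) =
          indicator {0<..} x *\<^sub>R (C1 * (x powr ((q + 1) / 2 - 1) / exp x))" for x
      using pt[of x] by (auto simp: indicator_def)
    show "integrable lborel (\<lambda>x. indicator {0<..} x *\<^sub>R (C1 * (x powr ((q + 1) / 2 - 1) / exp x)))"
    proof -
      have "integrable lborel (\<lambda>x. C1 * (indicator {0<..} x *\<^sub>R (x powr ((q + 1) / 2 - 1) / exp x)))"
        using gi[unfolded set_integrable_def] by (intro integrable_mult_right)
      then show ?thesis by (simp add: mult.left_commute)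
    qed
  qed
  note S = subst_step[OF s q int[unfolded f_def G_def G'_def]]
  show "set_integrable lborel {0<..} (\<lambda>x::real. x powr q * exp (- (x\<^sup>2) / (2 * s\<^sup>2)))"
    using S(1) by (simp add: einterval_0_inf f_def)
  have "(LBINT x=0..\<infinity>. f (G x) * G' x) = (LBINT t:{0<..}. C1 * (t powr ((q + 1) / 2 - 1) / exp t))"
    unfolding interval_lebesgue_integral_def einterval_0_inf set_lebesgue_integral_def
    using pt by (simp, intro Bochner_Integration.integral_cong) (auto simp: indicator_def)
  also have "\<dots> = C1 * Gamma ((q + 1) / 2)"
  proof -
    have "(LBINT t:{0<..}. C1 * (t powr ((q + 1) / 2 - 1) / exp t)) =
          (LBINT t. C1 * (indicator {0<..} t *\<^sub>R (t powr ((q + 1) / 2 - 1) / exp t)))"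
      unfolding set_lebesgue_integral_def by (intro Bochner_Integration.integral_cong) auto
    also have "\<dots> = C1 * (LBINT t:{0<..}. t powr ((q + 1) / 2 - 1) / exp t)"
      unfolding set_lebesgue_integral_def by (rule integral_mult_right_zero)
    finally show ?thesis using gv by simp
  qed
  finally have "(LBINT x=0..\<infinity>. f (G x) * G' x) = C1 * Gamma ((q + 1) / 2)" .
  then show "(LBINT x:{0<..}. x powr q * exp (- (x\<^sup>2) / (2 * s\<^sup>2))) =
       s powr (q + 1) * 2 powr ((q - 1) / 2) * Gamma ((q + 1) / 2)"
    using S(2) unfolding C1_def f_def G_def G'_def interval_lebesgue_integral_def einterval_0_inf by simp
qed


lemma normal_abs_moment:
  fixes s q :: real
  assumes s: "s > 0" and q: "q > 0"
  shows "integrable lborel (\<lambda>x. normal_density 0 s x * \<bar>x\<bar> powr q)"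
    "(\<integral>x. normal_density 0 s x * \<bar>x\<bar> powr q \<partial>lborel) =
        s powr q * 2 powr (q / 2) * Gamma ((q + 1) / 2) / sqrt pi"
proof -
  define h where "h = (\<lambda>x::real. indicator {0<..} x * (x powr q * exp (- (x\<^sup>2) / (2 * s\<^sup>2))))"
  define c0 where "c0 = 1 / sqrt (2 * pi * s\<^sup>2)"
  define K where "K = s powr (q + 1) * 2 powr ((q - 1) / 2) * Gamma ((q + 1) / 2)"
  note HM = half_moment[OF s q]
  have ih: "integrable lborel h"
    using HM(1) unfolding set_integrable_def h_def by simp
  have vh: "integral\<^sup>L lborel h = K"
    using HM(2) unfolding set_lebesgue_integral_def h_def K_def by simp
  have ih2: "integrable lborel (\<lambda>x. h (0 + (-1) * x))"
    by (rule lborel_integrable_real_affine[OF ih]) simp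
  have vh2: "integral\<^sup>L lborel (\<lambda>x. h (0 + (-1) * x)) = K"
    using lborel_integral_real_affine[of "-1" h 0] vh by simp
  have pt: "normal_density 0 s x * \<bar>x\<bar> powr q = c0 * (h x + h (0 + (-1) * x))" for x
  proof (cases "x > 0")
    case True then show ?thesis
      by (simp add: h_def c0_def normal_density_def indicator_def)
  next
    case False
    show ?thesis
    proof (cases "x = 0")
      case True then show ?thesis using q by (simp add: h_def c0_def normal_density_def indicator_def)
    next
      case False
      with \<open>\<not> x > 0\<close> have "x < 0" by simp
      then show ?thesis by (simp add: h_def c0_def normal_density_def indicator_def)
    qed
  qed
  have fe: "(\<lambda>x. normal_density 0 s x * \<bar>x\<bar> powr q) = (\<lambda>x. c0 * (h x + h (0 + (-1) * x)))"
    using pt by auto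
  show "integrable lborel (\<lambda>x. normal_density 0 s x * \<bar>x\<bar> powr q)"
    unfolding fe using ih ih2 by auto
  have "(\<integral>x. normal_density 0 s x * \<bar>x\<bar> powr q \<partial>lborel) = c0 * (K + K)"
    unfolding fe using ih ih2 vh vh2 by simp
  also have "c0 * (K + K) = s powr q * 2 powr (q / 2) * Gamma ((q + 1) / 2) / sqrt pi"
  proof -
    have sq: "sqrt (2 * pi * s\<^sup>2) = 2 powr (1/2) * sqrt pi * s"
      using s by (simp add: real_sqrt_mult powr_half_sqrt)
    have p1: "s powr (q + 1) = s powr q * s" using s by (simp add: powr_add)
    have p2: "2 * 2 powr ((q - 1) / 2) = 2 powr (1/2) * 2 powr (q / 2)"
    proof -
      have "2 * 2 powr ((q - 1) / 2) = 2 powr (1 + (q - 1) / 2)" by (simp add: powr_add)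
      also have "1 + (q - 1) / 2 = 1/2 + q / 2" by (simp add: field_simps)
      also have "(2::real) powr (1/2 + q / 2) = 2 powr (1/2) * 2 powr (q / 2)" by (rule powr_add)
      finally show ?thesis .
    qed
    have "c0 * (K + K) = (2 * 2 powr ((q - 1) / 2)) * s powr (q + 1) * Gamma ((q + 1) / 2) / sqrt (2 * pi * s\<^sup>2)"
      by (simp add: c0_def K_def)
    also have "\<dots> = s powr q * 2 powr (q / 2) * Gamma ((q + 1) / 2) / sqrt pi"
      unfolding p2 p1 sq using s by (simp add: field_simps)
    finally show ?thesis .
  qed
  finally show "(\<integral>x. normal_density 0 s x * \<bar>x\<bar> powr q \<partial>lborel) =
        s powr q * 2 powr (q / 2) * Gamma ((q + 1) / 2) / sqrt pi" .
qed


context prob_space begin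

lemma var_sum_indep:
  fixes Z :: "nat \<Rightarrow> 'a \<Rightarrow> real"
  assumes ind: "indep_vars (\<lambda>_. borel) Z {1..}"
    and sq: "\<And>i. 1 \<le> i \<Longrightarrow> integrable M (\<lambda>x. (Z i x)\<^sup>2)"
    and z: "\<And>i. 1 \<le> i \<Longrightarrow> expectation (Z i) = 0"
    and v: "\<And>i. 1 \<le> i \<Longrightarrow> expectation (\<lambda>x. (Z i x)\<^sup>2) = v"
  shows "integrable M (\<lambda>x. (\<Sum>i=1..n. Z i x)\<^sup>2) \<and> expectation (\<lambda>x. (\<Sum>i=1..n. Z i x)\<^sup>2) = real n * v"
proof (induction n)
  case 0
  then show ?case by simp
next
  case (Suc n)
  have rv: "random_variable borel (Z i)" if "1 \<le> i" for i
    using ind that unfolding indep_vars_def by auto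
  have iZ: "integrable M (Z i)" if "1 \<le> i" for i
    using square_integrable_imp_integrable[OF rv[OF that] sq[OF that]] .
  have iT: "integrable M (\<lambda>x. \<Sum>i=1..n. Z i x)"
    using iZ by (intro Bochner_Integration.integrable_sum) auto
  have eT: "expectation (\<lambda>x. \<Sum>i=1..n. Z i x) = 0"
    using iZ z by (subst Bochner_Integration.integral_sum) auto
  have indep: "indep_var borel (Z (Suc n)) borel (\<lambda>x. \<Sum>i\<in>{1..n}. Z i x)"
    by (rule indep_vars_sum) (auto intro: indep_vars_subset[OF ind])
  have iP: "integrable M (\<lambda>x. Z (Suc n) x * (\<Sum>i=1..n. Z i x))"
    by (rule indep_var_integrable[OF indep iZ iT]) simp
  have eP: "expectation (\<lambda>x. Z (Suc n) x * (\<Sum>i=1..n. Z i x)) = 0"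
    using indep_var_lebesgue_integral[OF indep iZ iT] eT by simp
  have eq: "(\<lambda>x. (\<Sum>i=1..Suc n. Z i x)\<^sup>2) =
      (\<lambda>x. (\<Sum>i=1..n. Z i x)\<^sup>2 + 2 * (Z (Suc n) x * (\<Sum>i=1..n. Z i x)) + (Z (Suc n) x)\<^sup>2)"
    by (rule ext) (simp add: power2_sum mult_ac)
  have i1: "integrable M (\<lambda>x. (\<Sum>i=1..n. Z i x)\<^sup>2)" using Suc.IH by simp
  have i2: "integrable M (\<lambda>x. 2 * (Z (Suc n) x * (\<Sum>i=1..n. Z i x)))" using iP by simp
  have i3: "integrable M (\<lambda>x. (Z (Suc n) x)\<^sup>2)" using sq by simp
  show ?case
    unfolding eq using i1 i2 i3 Suc.IH eP v[of "Suc n"]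
    by (simp add: Bochner_Integration.integral_add algebra_simps)
qed

end

lemma fsqrt_facts:
  assumes "1 \<le> m"
  shows "1 \<le> nat \<lfloor>sqrt (real m)\<rfloor>" "(nat \<lfloor>sqrt (real m)\<rfloor>)\<^sup>2 \<le> m"
    "m < (Suc (nat \<lfloor>sqrt (real m)\<rfloor>))\<^sup>2"
proof -
  define s where "s = sqrt (real m)"
  have s1: "1 \<le> s" using assms by (simp add: s_def)
  have fl: "1 \<le> \<lfloor>s\<rfloor>" using s1 by simp
  then show "1 \<le> nat \<lfloor>sqrt (real m)\<rfloor>" unfolding s_def by arith
  have j: "real (nat \<lfloor>s\<rfloor>) = of_int \<lfloor>s\<rfloor>" using fl by simp
  have a: "real (nat \<lfloor>s\<rfloor>) \<le> s" using j by linarith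
  have b: "s < real (nat \<lfloor>s\<rfloor>) + 1" using j by linarith
  have ss: "s\<^sup>2 = real m" by (simp add: s_def)
  have "(real (nat \<lfloor>s\<rfloor>))\<^sup>2 \<le> s\<^sup>2" using a fl by (intro power_mono) auto
  then have "real ((nat \<lfloor>s\<rfloor>)\<^sup>2) \<le> real m" using ss by simp
  then show "(nat \<lfloor>sqrt (real m)\<rfloor>)\<^sup>2 \<le> m" unfolding s_def by linarith
  have "s\<^sup>2 < (real (nat \<lfloor>s\<rfloor>) + 1)\<^sup>2" using b s1 by (intro power_strict_mono) auto
  then have "real m < real ((Suc (nat \<lfloor>s\<rfloor>))\<^sup>2)" using ss by (simp add: add.commute)
  then show "m < (Suc (nat \<lfloor>sqrt (real m)\<rfloor>))\<^sup>2" unfolding s_def by linarith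
qed

lemma seq_sandwich_squares:
  fixes S :: "nat \<Rightarrow> real"
  assumes mono: "\<And>m m'. m \<le> m' \<Longrightarrow> S m \<le> S m'"
    and nn: "\<And>m. 0 \<le> S m"
    and lim: "(\<lambda>k. S ((Suc k)\<^sup>2) / real ((Suc k)\<^sup>2)) \<longlonglongrightarrow> \<mu>"
  shows "(\<lambda>m. S m / real m) \<longlonglongrightarrow> \<mu>"
proof -
  define N where "N = (\<lambda>k::nat. (Suc k)\<^sup>2)"
  define b where "b = (\<lambda>k. S (N k) / real (N k))"
  define L where "L = (\<lambda>k. b k * (real (N k) / real (N (Suc k))))"
  define U where "U = (\<lambda>k. b (Suc k) * (real (N (Suc k)) / real (N k)))"
  define r where "r = (\<lambda>m::nat. nat \<lfloor>sqrt (real m)\<rfloor> - 1)"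
  have bl: "b \<longlonglongrightarrow> \<mu>" using lim unfolding b_def N_def .
  have r1: "(\<lambda>k. real (N k) / real (N (Suc k))) \<longlonglongrightarrow> 1"
  proof -
    have "(\<lambda>k. (real (Suc k) / real (Suc (Suc k)))\<^sup>2) \<longlonglongrightarrow> 1\<^sup>2"
      by (intro tendsto_power LIMSEQ_Suc[OF LIMSEQ_n_over_Suc_n])
    then show ?thesis by (simp add: N_def power_divide)
  qed
  have r2: "(\<lambda>k. real (N (Suc k)) / real (N k)) \<longlonglongrightarrow> 1"
  proof -
    have "(\<lambda>k. (real (Suc (Suc k)) / real (Suc k))\<^sup>2) \<longlonglongrightarrow> 1\<^sup>2"
      by (intro tendsto_power LIMSEQ_Suc[OF LIMSEQ_Suc_n_over_n])
    then show ?thesis by (simp add: N_def power_divide)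
  qed
  have Ll: "L \<longlonglongrightarrow> \<mu>" unfolding L_def using tendsto_mult[OF bl r1] by simp
  have Ul: "U \<longlonglongrightarrow> \<mu>" unfolding U_def using tendsto_mult[OF LIMSEQ_Suc[OF bl] r2] by simp
  have rlim: "filterlim r sequentially sequentially"
    unfolding filterlim_at_top
  proof
    fix Z :: nat
    show "eventually (\<lambda>m. Z \<le> r m) sequentially"
      unfolding eventually_sequentially
    proof (intro exI[of _ "(Z + 1)\<^sup>2"] allI impI)
      fix m assume m: "(Z + 1)\<^sup>2 \<le> m"
      have "real ((Z + 1)\<^sup>2) \<le> real m" using m by (simp only: of_nat_le_iff)
      then have "(real (Z + 1))\<^sup>2 \<le> real m" by simp
      then have "real (Z + 1) \<le> sqrt (real m)"
        by (intro real_le_rsqrt)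
      then have "Z + 1 \<le> nat \<lfloor>sqrt (real m)\<rfloor>" by linarith
      then show "Z \<le> r m" by (simp add: r_def)
    qed
  qed
  have Lr: "(\<lambda>m. L (r m)) \<longlonglongrightarrow> \<mu>" by (rule filterlim_compose[OF Ll rlim])
  have Ur: "(\<lambda>m. U (r m)) \<longlonglongrightarrow> \<mu>" by (rule filterlim_compose[OF Ul rlim])
  have ineq: "L (r m) \<le> S m / real m \<and> S m / real m \<le> U (r m)" if m: "1 \<le> m" for m
  proof -
    note F = fsqrt_facts[OF m]
    define j where "j = nat \<lfloor>sqrt (real m)\<rfloor>"
    have j1: "1 \<le> j" and j2: "j\<^sup>2 \<le> m" and j3: "m < (Suc j)\<^sup>2" using F by (auto simp: j_def)
    have Nr: "N (r m) = j\<^sup>2" using j1 by (simp add: N_def r_def j_def[symmetric])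
    have NSr: "N (Suc (r m)) = (Suc j)\<^sup>2" using j1 by (simp add: N_def r_def j_def[symmetric])
    have pos: "0 < real (j\<^sup>2)" "0 < real ((Suc j)\<^sup>2)" "0 < real m" using j1 m by auto
    have "L (r m) = S (j\<^sup>2) / real ((Suc j)\<^sup>2)"
      unfolding L_def b_def Nr NSr using pos by (simp add: field_simps)
    also have "\<dots> \<le> S m / real ((Suc j)\<^sup>2)"
      using mono[OF j2] pos by (simp add: divide_right_mono)
    also have "\<dots> \<le> S m / real m"
    proof -
      have "real m \<le> real ((Suc j)\<^sup>2)" using j3 by (simp only: of_nat_le_iff less_imp_le)
      then show ?thesis using pos nn[of m] by (intro divide_left_mono) auto
    qed
    finally have A: "L (r m) \<le> S m / real m" .
    have "S m / real m \<le> S ((Suc j)\<^sup>2) / real m"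
      using mono[of m "(Suc j)\<^sup>2"] j3 pos by (simp add: divide_right_mono)
    also have "\<dots> \<le> S ((Suc j)\<^sup>2) / real (j\<^sup>2)"
      using j2 pos nn[of "(Suc j)\<^sup>2"] by (intro divide_left_mono) auto
    also have "\<dots> = U (r m)"
      unfolding U_def b_def NSr Nr using pos by (simp add: field_simps)
    finally show ?thesis using A by simp
  qed
  show ?thesis
  proof (rule tendsto_sandwich[OF _ _ Lr Ur])
    show "eventually (\<lambda>m. L (r m) \<le> S m / real m) sequentially"
      using eventually_ge_at_top[of "1::nat"] by eventually_elim (use ineq in blast)
    show "eventually (\<lambda>m. S m / real m \<le> U (r m)) sequentially"
      using eventually_ge_at_top[of "1::nat"] by eventually_elim (use ineq in blast)
  qed
qed


lemma summable_inv_sq_Suc: "summable (\<lambda>k. c / (real (Suc k))\<^sup>2)"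
proof -
  have "summable (\<lambda>k. inverse ((real k)^2))" by (rule inverse_power_summable) simp
  then have "summable (\<lambda>k. inverse ((real (Suc k))^2))" by (subst summable_Suc_iff)
  then have "summable (\<lambda>k. c * inverse ((real (Suc k))^2))" by (rule summable_mult)
  then show ?thesis by (simp add: divide_inverse)
qed

context prob_space begin

lemma slln_nonneg:
  fixes Y :: "nat \<Rightarrow> 'a \<Rightarrow> real"
  assumes ind: "indep_vars (\<lambda>_. borel) Y {1..}"
    and nn: "\<And>i x. 1 \<le> i \<Longrightarrow> 0 \<le> Y i x"
    and sq: "\<And>i. 1 \<le> i \<Longrightarrow> integrable M (\<lambda>x. (Y i x)\<^sup>2)"
    and mu: "\<And>i. 1 \<le> i \<Longrightarrow> expectation (Y i) = \<mu>"
    and s2: "\<And>i. 1 \<le> i \<Longrightarrow> expectation (\<lambda>x. (Y i x)\<^sup>2) = s2"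
  shows "AE x in M. (\<lambda>n. (\<Sum>i=1..n. Y i x) / real n) \<longlonglongrightarrow> \<mu>"
proof -
  have rv[measurable]: "Y i \<in> borel_measurable M" if "1 \<le> i" for i
    using ind that unfolding indep_vars_def by auto
  have iY: "integrable M (Y i)" if "1 \<le> i" for i
    using square_integrable_imp_integrable[OF rv[OF that] sq[OF that]] .
  define Z where "Z = (\<lambda>i x. Y i x - \<mu>)"
  define v where "v = s2 - \<mu>\<^sup>2"
  have indZ: "indep_vars (\<lambda>_. borel) Z {1..}"
    unfolding Z_def by (rule indep_vars_compose2[OF ind]) simp
  have sqZ: "integrable M (\<lambda>x. (Z i x)\<^sup>2)" if "1 \<le> i" for i
  proof -
    have "(\<lambda>x. (Z i x)\<^sup>2) = (\<lambda>x. (Y i x)\<^sup>2 - 2 * \<mu> * Y i x + \<mu>\<^sup>2)"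
      by (simp add: Z_def power2_diff fun_eq_iff)
    then show ?thesis using sq[OF that] iY[OF that] by simp
  qed
  have zZ: "expectation (Z i) = 0" if "1 \<le> i" for i
    unfolding Z_def using iY[OF that] mu[OF that] prob_space by simp
  have vZ: "expectation (\<lambda>x. (Z i x)\<^sup>2) = v" if "1 \<le> i" for i
  proof -
    have "(\<lambda>x. (Z i x)\<^sup>2) = (\<lambda>x. ((Y i x)\<^sup>2 - 2 * \<mu> * Y i x) + \<mu>\<^sup>2)"
      by (simp add: Z_def power2_diff fun_eq_iff)
    then show ?thesis using sq[OF that] iY[OF that] mu[OF that] s2[OF that] prob_space
      by (simp add: Bochner_Integration.integral_add Bochner_Integration.integral_diff v_def power2_eq_square)
  qed
  have v0: "0 \<le> v" using vZ[of 1] by (metis integral_nonneg_AE AE_I2 zero_le_power2 order_refl)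
  define T where "T = (\<lambda>n x. \<Sum>i=1..n. Z i x)"
  have VS: "integrable M (\<lambda>x. (T n x)\<^sup>2) \<and> expectation (\<lambda>x. (T n x)\<^sup>2) = real n * v" for n
    unfolding T_def by (rule var_sum_indep[OF indZ sqZ zZ vZ])
  have rvZ[measurable]: "Z i \<in> borel_measurable M" if "1 \<le> i" for i
    using that unfolding Z_def by simp
  have rvT[measurable]: "T n \<in> borel_measurable M" for n
    unfolding T_def by (intro borel_measurable_sum) (use rvZ in auto)
  have eT: "expectation (T n) = 0" for n
  proof -
    have "integrable M (Z i)" if "1 \<le> i" for i using iY[OF that] unfolding Z_def by simp
    then show ?thesis unfolding T_def using zZ by (subst Bochner_Integration.integral_sum) auto
  qed
  have cheb: "prob {x \<in> space M. real n * e \<le> \<bar>T n x\<bar>} \<le> v / (real n * e\<^sup>2)"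
    if n: "1 \<le> n" and e: "0 < e" for n e
  proof -
    have "prob {x \<in> space M. real n * e \<le> \<bar>T n x - expectation (T n)\<bar>} \<le> variance (T n) / (real n * e)\<^sup>2"
      using n e VS[of n] by (intro Chebyshev_inequality) auto
    moreover have "variance (T n) = real n * v" using VS[of n] eT[of n] by simp
    ultimately show ?thesis using n e eT[of n] by (simp add: power2_eq_square field_simps)
  qed
  define A where "A = (\<lambda>j k. {x \<in> space M. real ((Suc k)\<^sup>2) * (1 / real (Suc j)) \<le> \<bar>T ((Suc k)\<^sup>2) x\<bar>})"
  have BC: "AE x in M. eventually (\<lambda>k. x \<in> space M - A j k) sequentially" for j
  proof (rule borel_cantelli_AE1)
    show "A j k \<in> sets M" for k unfolding A_def by measurable
    show "emeasure M (A j k) < \<infinity>" for k by (simp add: less_top[symmetric])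
    have b: "measure M (A j k) \<le> (v * (real (Suc j))\<^sup>2) / (real (Suc k))\<^sup>2" for k
    proof -
      have "measure M (A j k) \<le> v / (real ((Suc k)\<^sup>2) * (1 / real (Suc j))\<^sup>2)"
        unfolding A_def by (rule cheb) auto
      also have "\<dots> = (v * (real (Suc j))\<^sup>2) / (real (Suc k))\<^sup>2"
        by (simp add: field_simps)
      finally show ?thesis .
    qed
    show "summable (\<lambda>k. measure M (A j k))"
      by (rule summable_comparison_test'[OF summable_inv_sq_Suc[of "v * (real (Suc j))\<^sup>2"], of 0])
         (use b in auto)
  qed
  have "AE x in M. \<forall>j. eventually (\<lambda>k. x \<in> space M - A j k) sequentially"
    using BC by (subst AE_all_countable) auto
  then show ?thesis
  proof (rule AE_mp[OF _ AE_I2[OF impI]])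
    fix x assume x: "x \<in> space M" and ev: "\<forall>j. eventually (\<lambda>k. x \<in> space M - A j k) sequentially"
    define S where "S = (\<lambda>n. \<Sum>i=1..n. Y i x)"
    have ST: "S n = T n x + real n * \<mu>" for n
      by (simp add: S_def T_def Z_def sum_subtractf)
    have Tl: "(\<lambda>k. T ((Suc k)\<^sup>2) x / real ((Suc k)\<^sup>2)) \<longlonglongrightarrow> 0"
    proof (rule LIMSEQ_I)
      fix r :: real assume r: "0 < r"
      obtain j where j: "1 / real (Suc j) < r"
        using reals_Archimedean[OF r] by (auto simp: inverse_eq_divide)
      obtain K where K: "\<And>k. K \<le> k \<Longrightarrow> x \<in> space M - A j k"
        using ev[rule_format, of j] unfolding eventually_sequentially by blast
      show "\<exists>K. \<forall>k\<ge>K. norm (T ((Suc k)\<^sup>2) x / real ((Suc k)\<^sup>2) - 0) < r"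
      proof (intro exI[of _ K] allI impI)
        fix k assume "K \<le> k"
        then have "\<bar>T ((Suc k)\<^sup>2) x\<bar> < real ((Suc k)\<^sup>2) * (1 / real (Suc j))"
          using K[of k] x unfolding A_def by auto
        also have "\<dots> < real ((Suc k)\<^sup>2) * r" using j by (intro mult_strict_left_mono) auto
        finally show "norm (T ((Suc k)\<^sup>2) x / real ((Suc k)\<^sup>2) - 0) < r"
          by (simp add: divide_less_eq abs_divide mult.commute)
      qed
    qed
    have Sl: "(\<lambda>k. S ((Suc k)\<^sup>2) / real ((Suc k)\<^sup>2)) \<longlonglongrightarrow> \<mu>"
    proof -
      have "(\<lambda>k. T ((Suc k)\<^sup>2) x / real ((Suc k)\<^sup>2) + \<mu>) \<longlonglongrightarrow> 0 + \<mu>"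
        by (intro tendsto_add Tl tendsto_const)
      moreover have "S ((Suc k)\<^sup>2) / real ((Suc k)\<^sup>2) = T ((Suc k)\<^sup>2) x / real ((Suc k)\<^sup>2) + \<mu>" for k
        unfolding ST by (simp add: field_simps)
      ultimately show ?thesis by simp
    qed
    have mono: "S m \<le> S m'" if "m \<le> m'" for m m'
      unfolding S_def using that nn by (intro sum_mono2) auto
    have nS: "0 \<le> S m" for m unfolding S_def using nn by (intro sum_nonneg) auto
    show "(\<lambda>n. (\<Sum>i=1..n. Y i x) / real n) \<longlonglongrightarrow> \<mu>"
      using seq_sandwich_squares[OF mono nS Sl] unfolding S_def .
  qed
qed

end

lemma normal_exp_shift:
  assumes s: "s > 0"
  shows "normal_density 0 s x * exp (l * x) = exp (l\<^sup>2 * s\<^sup>2 / 2) * normal_density (l * s\<^sup>2) s x"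
proof -
  have "- (x\<^sup>2) / (2 * s\<^sup>2) + l * x = l\<^sup>2 * s\<^sup>2 / 2 + (- (x - l * s\<^sup>2)\<^sup>2 / (2 * s\<^sup>2))"
    using s by (simp add: field_simps power2_eq_square)
  then have "exp (- (x\<^sup>2) / (2 * s\<^sup>2)) * exp (l * x) = exp (l\<^sup>2 * s\<^sup>2 / 2) * exp (- (x - l * s\<^sup>2)\<^sup>2 / (2 * s\<^sup>2))"
    by (metis exp_add)
  then show ?thesis unfolding normal_density_def by (simp add: mult_ac)
qed

lemma normal_exp_integral:
  assumes s: "s > 0"
  shows "integrable lborel (\<lambda>x. normal_density 0 s x * exp (l * x))"
    "(\<integral>x. normal_density 0 s x * exp (l * x) \<partial>lborel) = exp (l\<^sup>2 * s\<^sup>2 / 2)"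
  unfolding normal_exp_shift[OF s] using s by simp_all

context prob_space begin

lemma normal_prob_integral:
  assumes D: "distributed M lborel X (normal_density 0 s)" and A: "A \<in> sets borel"
  shows "prob (X -` A \<inter> space M) = (\<integral>x. normal_density 0 s x * indicator A x \<partial>lborel)"
proof -
  have Xm[measurable]: "X \<in> borel_measurable M"
    using distributed_measurable[OF D] by simp
  have "(\<integral>x. normal_density 0 s x * indicator A x \<partial>lborel) = (\<integral>x. indicator A (X x) \<partial>M)"
    by (rule distributed_integral[OF D]) (use A in auto)
  also have "\<dots> = (\<integral>x. indicator (X -` A \<inter> space M) x \<partial>M)"
    by (intro Bochner_Integration.integral_cong) (auto simp: indicator_def)
  also have "\<dots> = prob (X -` A \<inter> space M)"
    by simp
  finally show ?thesis by simp
qed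

lemma normal_tail_upper:
  assumes D: "distributed M lborel X (normal_density 0 s)" and s: "s > 0" and t: "t \<ge> 0"
  shows "prob {x \<in> space M. t \<le> \<bar>X x\<bar>} \<le> 2 * exp (- (t\<^sup>2) / (2 * s\<^sup>2))"
proof -
  define l where "l = t / s\<^sup>2"
  have l0: "l \<ge> 0" using t s by (simp add: l_def)
  have eq: "{x \<in> space M. t \<le> \<bar>X x\<bar>} = X -` {y. t \<le> \<bar>y\<bar>} \<inter> space M" by auto
  have "prob {x \<in> space M. t \<le> \<bar>X x\<bar>} = (\<integral>x. normal_density 0 s x * indicator {y. t \<le> \<bar>y\<bar>} x \<partial>lborel)"
    unfolding eq by (rule normal_prob_integral[OF D]) measurable
  also have "\<dots> \<le> (\<integral>x. exp (- l * t) * (normal_density 0 s x * exp (l * x)) +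
                      exp (- l * t) * (normal_density 0 s x * exp ((- l) * x)) \<partial>lborel)"
  proof (rule integral_mono')
    show "integrable lborel (\<lambda>x. exp (- l * t) * (normal_density 0 s x * exp (l * x)) +
                      exp (- l * t) * (normal_density 0 s x * exp ((- l) * x)))"
      using normal_exp_integral(1)[OF s, of l] normal_exp_integral(1)[OF s, of "-l"]
      by (intro Bochner_Integration.integrable_add integrable_mult_right) simp_all
    fix x :: real
    show "0 \<le> exp (- l * t) * (normal_density 0 s x * exp (l * x)) +
                      exp (- l * t) * (normal_density 0 s x * exp ((- l) * x))"
      by (intro add_nonneg_nonneg mult_nonneg_nonneg) auto
    have "indicator {y. t \<le> \<bar>y\<bar>} x \<le> exp (l * (x - t)) + exp (l * (- x - t))"
    proof (cases "t \<le> \<bar>x\<bar>")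
      case True
      show ?thesis
      proof (cases "x \<ge> 0")
        case True
        with \<open>t \<le> \<bar>x\<bar>\<close> have "0 \<le> l * (x - t)" using l0 by simp
        then have "1 \<le> exp (l * (x - t))" by simp
        then show ?thesis using \<open>t \<le> \<bar>x\<bar>\<close> by (simp add: add_increasing2)
      next
        case False
        with \<open>t \<le> \<bar>x\<bar>\<close> have "0 \<le> l * (- x - t)" using l0 by simp
        then have "1 \<le> exp (l * (- x - t))" by simp
        then show ?thesis using \<open>t \<le> \<bar>x\<bar>\<close> by (simp add: add_increasing)
      qed
    next
      case False
      then show ?thesis by (simp add: add_nonneg_nonneg)
    qed
    then have "normal_density 0 s x * indicator {y. t \<le> \<bar>y\<bar>} x \<le>
               normal_density 0 s x * (exp (l * (x - t)) + exp (l * (- x - t)))"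
      by (intro mult_left_mono) auto
    also have "\<dots> = exp (- l * t) * (normal_density 0 s x * exp (l * x)) +
                      exp (- l * t) * (normal_density 0 s x * exp ((- l) * x))"
      by (simp add: algebra_simps flip: exp_add)
    finally show "normal_density 0 s x * indicator {y. t \<le> \<bar>y\<bar>} x \<le> \<dots>" .
  qed
  also have "\<dots> = exp (- l * t) * exp (l\<^sup>2 * s\<^sup>2 / 2) + exp (- l * t) * exp ((- l)\<^sup>2 * s\<^sup>2 / 2)"
    using normal_exp_integral[OF s, of l] normal_exp_integral[OF s, of "-l"] by simp
  also have "\<dots> = 2 * exp (- l * t + l\<^sup>2 * s\<^sup>2 / 2)"
    by (simp only: exp_add power2_minus mult_2)
  also have "- l * t + l\<^sup>2 * s\<^sup>2 / 2 = - (t\<^sup>2) / (2 * s\<^sup>2)"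
    using s by (simp add: l_def field_simps power2_eq_square)
  finally show ?thesis .
qed

lemma normal_tail_lower:
  assumes D: "distributed M lborel X (normal_density 0 s)" and s: "s > 0" and t: "t \<ge> 0"
  shows "s * normal_density 0 s (t + s) \<le> prob {x \<in> space M. t \<le> \<bar>X x\<bar>}"
proof -
  define c where "c = normal_density 0 s (t + s)"
  have eq: "{x \<in> space M. t \<le> \<bar>X x\<bar>} = X -` {y. t \<le> \<bar>y\<bar>} \<inter> space M" by auto
  have "s * c = (\<integral>x. c * indicator {t..t+s} x \<partial>lborel)"
    using s by simp
  also have "\<dots> \<le> (\<integral>x. normal_density 0 s x * indicator {y. t \<le> \<bar>y\<bar>} x \<partial>lborel)"
  proof (rule integral_mono)
    show "integrable lborel (\<lambda>x. c * indicator {t..t+s} x)"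
      using s by (intro integrable_mult_right integrable_real_indicator) (auto simp: emeasure_lborel_Icc)
    show "integrable lborel (\<lambda>x. normal_density 0 s x * indicator {y. t \<le> \<bar>y\<bar>} x)"
      by (rule Bochner_Integration.integrable_bound[OF integrable_normal_density]) (use s in \<open>auto simp: indicator_def\<close>)
    fix x :: real
    show "c * indicator {t..t+s} x \<le> normal_density 0 s x * indicator {y. t \<le> \<bar>y\<bar>} x"
    proof (cases "x \<in> {t..t+s}")
      case True
      then have "x\<^sup>2 \<le> (t + s)\<^sup>2" using t by (intro power_mono) auto
      then have "c \<le> normal_density 0 s x"
        unfolding c_def normal_density_def using s by (auto simp: divide_right_mono)
      then show ?thesis using True t by (auto simp: indicator_def)
    qed (auto simp: indicator_def)
  qed
  also have "\<dots> = prob {x \<in> space M. t \<le> \<bar>X x\<bar>}"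
    unfolding eq by (rule normal_prob_integral[OF D, symmetric]) measurable
  finally show ?thesis unfolding c_def .
qed

end

lemma G_tendsto: "((\<lambda>L::real. (sqrt (2 * L) + 3 + ln (2 * L)) / L) \<longlongrightarrow> 0) at_top"
proof -
  have t1: "((\<lambda>L::real. sqrt 2 / sqrt L) \<longlongrightarrow> 0) at_top"
    by (intro tendsto_divide_0[OF tendsto_const] filterlim_at_top_imp_at_infinity[OF sqrt_at_top])
  have t2: "((\<lambda>L::real. 3 / L) \<longlongrightarrow> 0) at_top"
    by (intro tendsto_divide_0[OF tendsto_const] filterlim_at_top_imp_at_infinity[OF filterlim_ident])
  have f2: "filterlim (\<lambda>L::real. 2 * L) at_top at_top"
    by (rule filterlim_tendsto_pos_mult_at_top[OF tendsto_const _ filterlim_ident]) simp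
  have t3: "((\<lambda>L::real. ln (2 * L) / (2 * L)) \<longlongrightarrow> 0) at_top"
    by (rule filterlim_compose[OF ln_x_over_x_tendsto_0 f2])
  have "((\<lambda>L::real. sqrt 2 / sqrt L + 3 / L + 2 * (ln (2 * L) / (2 * L))) \<longlongrightarrow> 0 + 0 + 2 * 0) at_top"
    by (intro tendsto_add tendsto_mult t1 t2 t3 tendsto_const)
  moreover have "eventually (\<lambda>L::real. sqrt 2 / sqrt L + 3 / L + 2 * (ln (2 * L) / (2 * L)) =
                   (sqrt (2 * L) + 3 + ln (2 * L)) / L) at_top"
    using eventually_gt_at_top[of "0::real"]
  proof eventually_elim
    case (elim L)
    have "sqrt 2 / sqrt L = sqrt (2 * L) / L"
      using elim by (simp add: real_sqrt_mult field_simps)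
    then show ?case using elim by (simp add: field_simps)
  qed
  ultimately show ?thesis by (simp add: tendsto_cong)
qed

lemma lower_asym:
  fixes e :: real assumes e: "0 < e" "e < 1"
  shows "eventually (\<lambda>d. 2 * ln (real d) \<le>
     real d * (exp (- (((1 - e) * sqrt (2 * ln (real d)) + 1)\<^sup>2) / 2) / sqrt (2 * pi))) sequentially"
proof -
  define \<delta> where "\<delta> = 1 - (1 - e)\<^sup>2"
  have \<delta>: "0 < \<delta>" using e by (simp add: \<delta>_def power2_eq_square algebra_simps)
  have ev: "eventually (\<lambda>L::real. (sqrt (2 * L) + 3 + ln (2 * L)) / L < \<delta> \<and> 0 < L) at_top"
    using order_tendstoD(2)[OF G_tendsto \<delta>] eventually_gt_at_top[of "0::real"] by eventually_elim auto
  have fl: "filterlim (\<lambda>d. ln (real d)) at_top sequentially"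
    by (rule filterlim_compose[OF ln_at_top filterlim_real_sequentially])
  have ev2: "eventually (\<lambda>d. (sqrt (2 * ln (real d)) + 3 + ln (2 * ln (real d))) / ln (real d) < \<delta> \<and> 0 < ln (real d)) sequentially"
    by (rule eventually_compose_filterlim[OF ev fl])
  show ?thesis using ev2
  proof eventually_elim
    case (elim d)
    define L where "L = ln (real d)"
    have L0: "0 < L" and GL: "sqrt (2 * L) + 3 + ln (2 * L) < \<delta> * L"
      using elim by (auto simp: L_def pos_divide_less_eq)
    have d0: "0 < real d" using L0 unfolding L_def by (cases "d = 0") auto
    have dL: "real d = exp L" using d0 by (simp add: L_def)
    define u where "u = (1 - e) * sqrt (2 * L)"
    have sq0: "0 \<le> sqrt (2 * L)" using L0 by simp
    have ub: "u \<le> sqrt (2 * L)" unfolding u_def using e sq0 by (intro mult_left_le_one_le) auto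
    have u2: "u\<^sup>2 = (1 - e)\<^sup>2 * (2 * L)" using L0 by (simp add: u_def power_mult_distrib)
    have sq: "(u + 1)\<^sup>2 / 2 = (1 - e)\<^sup>2 * L + u + 1/2"
    proof -
      have "(u + 1)\<^sup>2 = u\<^sup>2 + 2 * u + 1" by (simp add: power2_eq_square algebra_simps)
      then show ?thesis unfolding u2 by simp
    qed
    have sp: "ln (sqrt (2 * pi)) \<le> 2"
    proof -
      have "ln (sqrt (2 * pi)) \<le> sqrt (2 * pi) - 1" by (rule ln_le_minus_one) simp
      moreover have "sqrt (2 * pi) \<le> 3"
        by (rule real_le_lsqrt) (use pi_less_4 in auto)
      ultimately show ?thesis by linarith
    qed
    define E where "E = L - (u + 1)\<^sup>2 / 2 - ln (sqrt (2 * pi))"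
    have dl: "\<delta> * L = L - (1 - e)\<^sup>2 * L" by (simp add: \<delta>_def algebra_simps)
    have "ln (2 * L) < E"
      unfolding E_def sq using GL ub sp dl by linarith
    then have "exp (ln (2 * L)) \<le> exp E" by (subst exp_le_cancel_iff) linarith
    then have "2 * L \<le> exp E" using L0 by simp
    also have "exp E = real d * (exp (- ((u + 1)\<^sup>2) / 2) / sqrt (2 * pi))"
    proof -
      have e1: "exp E = exp L / exp ((u + 1)\<^sup>2 / 2) / exp (ln (sqrt (2 * pi)))"
        unfolding E_def by (simp only: exp_diff)
      have e2: "exp (ln (sqrt (2 * pi))) = sqrt (2 * pi)" by (rule exp_ln) simp
      have e3: "exp (- ((u + 1)\<^sup>2) / 2) = inverse (exp ((u + 1)\<^sup>2 / 2))"
        by (simp only: divide_minus_left exp_minus)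
      show ?thesis unfolding e1 e2 e3 dL by (simp only: divide_inverse mult.assoc)
    qed
    finally show ?case unfolding L_def u_def .
  qed
qed


context prob_space begin

lemma max_upper_ev:
  fixes g :: "nat \<Rightarrow> 'a \<Rightarrow> real" and s e :: real
  assumes s: "s > 0" and e: "e > 0"
    and D: "\<And>i. i \<ge> 1 \<Longrightarrow> distributed M lborel (g i) (normal_density 0 s)"
  shows "AE x in M. eventually (\<lambda>d. \<bar>g d x\<bar> < (1 + e) * (s * sqrt (2 * ln (real d)))) sequentially"
proof -
  have gm[measurable]: "g i \<in> borel_measurable M" if "1 \<le> i" for i
    using distributed_measurable[OF D[OF that]] by simp
  define t where "t = (\<lambda>d::nat. (1 + e) * (s * sqrt (2 * ln (real d))))"
  define A where "A = (\<lambda>d. if 2 \<le> d then {x \<in> space M. t d \<le> \<bar>g d x\<bar>} else {})"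
  have "AE x in M. eventually (\<lambda>d. x \<in> space M - A d) sequentially"
  proof (rule borel_cantelli_AE1)
    show "A d \<in> sets M" for d unfolding A_def by (cases "2 \<le> d") auto
    show "emeasure M (A d) < \<infinity>" for d by (simp add: less_top[symmetric])
    have b: "measure M (A d) \<le> 2 * real d powr (- ((1 + e)\<^sup>2))" if d: "2 \<le> d" for d
    proof -
      have t0: "0 \<le> t d" using d e s by (simp add: t_def)
      have "measure M (A d) \<le> 2 * exp (- ((t d)\<^sup>2) / (2 * s\<^sup>2))"
        using normal_tail_upper[OF D s t0] d by (simp add: A_def)
      also have "- ((t d)\<^sup>2) / (2 * s\<^sup>2) = - ((1 + e)\<^sup>2) * ln (real d)"
      proof -
        have l0: "0 \<le> ln (real d)" using d by simp
        have "(t d)\<^sup>2 = (1 + e)\<^sup>2 * s\<^sup>2 * (2 * ln (real d))"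
          using l0 by (simp add: t_def power_mult_distrib)
        then show ?thesis using s by (simp add: divide_simps)
      qed
      also have "exp (- ((1 + e)\<^sup>2) * ln (real d)) = real d powr (- ((1 + e)\<^sup>2))"
        using d by (simp add: powr_def)
      finally show ?thesis .
    qed
    have sm: "summable (\<lambda>d. 2 * real d powr (- ((1 + e)\<^sup>2)))"
    proof -
      have "- ((1 + e)\<^sup>2) < -1" using e by (simp add: power2_eq_square algebra_simps add_pos_pos)
      then show ?thesis by (intro summable_mult) (simp add: summable_real_powr_iff)
    qed
    show "summable (\<lambda>d. measure M (A d))"
      by (rule summable_comparison_test'[OF sm, of 2]) (use b in auto)
  qed
  then show ?thesis
  proof (rule AE_mp[OF _ AE_I2[OF impI]])
    fix x assume x: "x \<in> space M" and ev: "eventually (\<lambda>d. x \<in> space M - A d) sequentially"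
    show "eventually (\<lambda>d. \<bar>g d x\<bar> < (1 + e) * (s * sqrt (2 * ln (real d)))) sequentially"
      using ev eventually_ge_at_top[of "2::nat"]
      by eventually_elim (use x in \<open>auto simp: A_def t_def\<close>)
  qed
qed

lemma max_lower_ev:
  fixes g :: "nat \<Rightarrow> 'a \<Rightarrow> real" and s e :: real
  assumes s: "s > 0" and e: "0 < e" "e < 1"
    and ind: "indep_vars (\<lambda>_. borel) g {1..}"
    and D: "\<And>i. i \<ge> 1 \<Longrightarrow> distributed M lborel (g i) (normal_density 0 s)"
  shows "AE x in M. eventually (\<lambda>d. \<exists>i\<in>{1..d}. (1 - e) * (s * sqrt (2 * ln (real d))) \<le> \<bar>g i x\<bar>) sequentially"
proof -
  have gm[measurable]: "g i \<in> borel_measurable M" if "1 \<le> i" for i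
    using distributed_measurable[OF D[OF that]] by simp
  define b where "b = (\<lambda>d::nat. (1 - e) * (s * sqrt (2 * ln (real d))))"
  define B where "B = (\<lambda>d. if 2 \<le> d then (\<Inter>i\<in>{1..d}. g i -` {y. \<bar>y\<bar> < b d} \<inter> space M) else {})"
  have Bs: "B d \<in> sets M" for d
  proof (cases "2 \<le> d")
    case True
    have "(\<Inter>i\<in>{1..d}. g i -` {y. \<bar>y\<bar> < b d} \<inter> space M) \<in> sets M"
      using True by (intro sets.finite_INT) auto
    then show ?thesis using True by (simp add: B_def)
  qed (simp add: B_def)
  have "AE x in M. eventually (\<lambda>d. x \<in> space M - B d) sequentially"
  proof (rule borel_cantelli_AE1)
    show "B d \<in> sets M" for d by (rule Bs)
    show "emeasure M (B d) < \<infinity>" for d by (simp add: less_top[symmetric])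
    have b1: "measure M (B d) \<le> exp (- (real d * (exp (- (((1 - e) * sqrt (2 * ln (real d)) + 1)\<^sup>2) / 2) / sqrt (2 * pi))))"
      if d: "2 \<le> d" for d
    proof -
      define c where "c = exp (- (((1 - e) * sqrt (2 * ln (real d)) + 1)\<^sup>2) / 2) / sqrt (2 * pi)"
      have b0: "0 \<le> b d" using d e s by (simp add: b_def)
      have cdef: "s * normal_density 0 s (b d + s) = c"
      proof -
        define u where "u = (1 - e) * sqrt (2 * ln (real d))"
        have "b d + s = s * (u + 1)" by (simp add: b_def u_def algebra_simps)
        then have "(b d + s)\<^sup>2 = s\<^sup>2 * (u + 1)\<^sup>2" by (simp add: power_mult_distrib)
        then have h1: "- ((b d + s - 0)\<^sup>2) / (2 * s\<^sup>2) = - ((u + 1)\<^sup>2) / 2" using s by simp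
        have h2: "s * (1 / sqrt (2 * pi * s\<^sup>2)) = 1 / sqrt (2 * pi)"
          using s by (simp add: real_sqrt_mult)
        have "s * normal_density 0 s (b d + s) = (s * (1 / sqrt (2 * pi * s\<^sup>2))) * exp (- ((b d + s - 0)\<^sup>2) / (2 * s\<^sup>2))"
          unfolding normal_density_def by (simp only: mult.assoc)
        also have "\<dots> = c" unfolding h1 h2 c_def u_def by simp
        finally show ?thesis .
      qed
      have Bd: "B d = (\<Inter>i\<in>{1..d}. g i -` {y. \<bar>y\<bar> < b d} \<inter> space M)" using d by (simp add: B_def)
      have bs: "{y::real. \<bar>y\<bar> < b d} \<in> sets borel" by measurable
      have "measure M (B d) = (\<Prod>i\<in>{1..d}. prob (g i -` {y. \<bar>y\<bar> < b d} \<inter> space M))"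
        unfolding Bd by (rule indep_varsD[OF ind]) (use d bs in auto)
      also have "\<dots> \<le> (\<Prod>i\<in>{1..d}. exp (- c))"
      proof (rule prod_mono)
        fix i assume i: "i \<in> {1..d}"
        have i1: "1 \<le> i" using i by simp
        have "g i -` {y. \<bar>y\<bar> < b d} \<inter> space M = space M - {x \<in> space M. b d \<le> \<bar>g i x\<bar>}" by auto
        moreover have ev: "{x \<in> space M. b d \<le> \<bar>g i x\<bar>} \<in> events" using i1 by measurable
        ultimately have "prob (g i -` {y. \<bar>y\<bar> < b d} \<inter> space M) = 1 - prob {x \<in> space M. b d \<le> \<bar>g i x\<bar>}"
          using prob_compl[OF ev] by simp
        also have "\<dots> \<le> 1 - c" using normal_tail_lower[OF D[OF i1] s b0] cdef by simp
        also have "\<dots> \<le> exp (- c)" using exp_ge_add_one_self[of "-c"] by simp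
        finally show "0 \<le> prob (g i -` {y. \<bar>y\<bar> < b d} \<inter> space M) \<and>
             prob (g i -` {y. \<bar>y\<bar> < b d} \<inter> space M) \<le> exp (- c)" by simp
      qed
      also have "\<dots> = exp (- c) ^ d" by (simp only: prod_constant card_atLeastAtMost) simp
      also have "\<dots> = exp (real d * (- c))" by (rule exp_of_nat_mult[symmetric])
      also have "\<dots> = exp (- (real d * c))" by simp
      finally show ?thesis unfolding c_def .
    qed
    have b2: "eventually (\<lambda>d. measure M (B d) \<le> inverse (real d ^ 2)) sequentially"
      using lower_asym[OF e] eventually_ge_at_top[of "2::nat"]
    proof eventually_elim
      case (elim d)
      have "measure M (B d) \<le> exp (- (real d * (exp (- (((1 - e) * sqrt (2 * ln (real d)) + 1)\<^sup>2) / 2) / sqrt (2 * pi))))"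
        using b1[OF elim(2)] .
      also have "\<dots> \<le> exp (- (2 * ln (real d)))"
        by (subst exp_le_cancel_iff) (use elim(1) in linarith)
      also have "\<dots> = inverse (real d ^ 2)"
      proof -
        have "exp (2 * ln (real d)) = real d ^ 2"
          using exp_of_nat_mult[of 2 "ln (real d)"] elim by simp
        then show ?thesis by (simp add: exp_minus)
      qed
      finally show ?case .
    qed
    then obtain N where N: "\<And>d. N \<le> d \<Longrightarrow> measure M (B d) \<le> inverse (real d ^ 2)"
      unfolding eventually_sequentially by blast
    show "summable (\<lambda>d. measure M (B d))"
      by (rule summable_comparison_test'[OF inverse_power_summable[of 2], of N]) (use N in auto)
  qed
  then show ?thesis
  proof (rule AE_mp[OF _ AE_I2[OF impI]])
    fix x assume x: "x \<in> space M" and ev: "eventually (\<lambda>d. x \<in> space M - B d) sequentially"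
    show "eventually (\<lambda>d. \<exists>i\<in>{1..d}. (1 - e) * (s * sqrt (2 * ln (real d))) \<le> \<bar>g i x\<bar>) sequentially"
      using ev eventually_ge_at_top[of "2::nat"]
    proof eventually_elim
      case (elim d)
      have "x \<notin> B d" using elim by simp
      then have "\<not> (\<forall>i\<in>{1..d}. \<bar>g i x\<bar> < b d)" using x elim(2) by (simp add: B_def)
      then show ?case by (auto simp: b_def not_less)
    qed
  qed
qed

end

lemma a_at_top:
  assumes s: "s > 0"
  shows "filterlim (\<lambda>d. s * sqrt (2 * ln (real d))) at_top sequentially"
proof -
  have f1: "filterlim (\<lambda>d. ln (real d)) at_top sequentially"
    by (rule filterlim_compose[OF ln_at_top filterlim_real_sequentially])
  have f2: "filterlim (\<lambda>d. 2 * ln (real d)) at_top sequentially"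
    by (rule filterlim_tendsto_pos_mult_at_top[OF tendsto_const _ f1]) simp
  have f3: "filterlim (\<lambda>d. sqrt (2 * ln (real d))) at_top sequentially"
    by (rule filterlim_compose[OF sqrt_at_top f2])
  show ?thesis by (rule filterlim_tendsto_pos_mult_at_top[OF tendsto_const s f3])
qed

context prob_space begin

lemma max_limit:
  fixes g :: "nat \<Rightarrow> 'a \<Rightarrow> real" and s :: real
  assumes s: "s > 0"
    and ind: "indep_vars (\<lambda>_. borel) g {1..}"
    and D: "\<And>i. i \<ge> 1 \<Longrightarrow> distributed M lborel (g i) (normal_density 0 s)"
  shows "AE x in M. (\<lambda>d. Max ((\<lambda>i. \<bar>g i x\<bar>) ` {1..d}) / (s * sqrt (2 * ln (real d)))) \<longlonglongrightarrow> 1"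
proof -
  define a where "a = (\<lambda>d::nat. s * sqrt (2 * ln (real d)))"
  have U: "AE x in M. \<forall>j. eventually (\<lambda>d. \<bar>g d x\<bar> < (1 + 1 / real (Suc j)) * a d) sequentially"
    unfolding AE_all_countable a_def by (intro allI max_upper_ev[OF s _ D]) auto
  have L: "AE x in M. \<forall>j. eventually (\<lambda>d. \<exists>i\<in>{1..d}. (1 - 1 / real (Suc j)) * a d \<le> \<bar>g i x\<bar>) sequentially"
  proof -
    have "AE x in M. \<forall>j. eventually (\<lambda>d. \<exists>i\<in>{1..d}. (1 - 1 / real (Suc (Suc j))) * a d \<le> \<bar>g i x\<bar>) sequentially"
      unfolding AE_all_countable a_def by (intro allI max_lower_ev[OF s _ _ ind D]) auto
    then show ?thesis
    proof (rule AE_mp[OF _ AE_I2[OF impI]])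
      fix x assume H: "\<forall>j. eventually (\<lambda>d. \<exists>i\<in>{1..d}. (1 - 1 / real (Suc (Suc j))) * a d \<le> \<bar>g i x\<bar>) sequentially"
      show "\<forall>j. eventually (\<lambda>d. \<exists>i\<in>{1..d}. (1 - 1 / real (Suc j)) * a d \<le> \<bar>g i x\<bar>) sequentially"
      proof
        fix j
        have "eventually (\<lambda>d. \<exists>i\<in>{1..d}. (1 - 1 / real (Suc (Suc j))) * a d \<le> \<bar>g i x\<bar>) sequentially"
          using H by blast
        moreover have "eventually (\<lambda>d. 0 \<le> a d) sequentially"
          using eventually_ge_at_top[of "1::nat"] by eventually_elim (simp add: a_def s less_imp_le)
        ultimately show "eventually (\<lambda>d. \<exists>i\<in>{1..d}. (1 - 1 / real (Suc j)) * a d \<le> \<bar>g i x\<bar>) sequentially"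
        proof eventually_elim
          case (elim d)
          then obtain i where i: "i \<in> {1..d}" "(1 - 1 / real (Suc (Suc j))) * a d \<le> \<bar>g i x\<bar>" by blast
          have "(1 - 1 / real (Suc j)) * a d \<le> (1 - 1 / real (Suc (Suc j))) * a d"
            using elim(2) by (intro mult_right_mono) (auto simp: field_simps)
          then show ?case using i by force
        qed
      qed
    qed
  qed
  have ainf: "filterlim a at_top sequentially" unfolding a_def by (rule a_at_top[OF s])
  have amono: "a i \<le> a d" if "1 \<le> i" "i \<le> d" for i d
    using that s unfolding a_def by (intro mult_left_mono real_sqrt_le_mono) auto
  show ?thesis
    using U L
  proof (eventually_elim)
    case (elim x)
    show ?case
    proof (rule LIMSEQ_I)
      fix r :: real assume r: "0 < r"
      obtain j where j: "1 / real (Suc j) < r"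
        using reals_Archimedean[OF r] by (auto simp: inverse_eq_divide)
      define \<epsilon> where "\<epsilon> = 1 / real (Suc j)"
      have \<epsilon>0: "0 < \<epsilon>" by (simp add: \<epsilon>_def)
      obtain N1 where N1: "\<And>d. N1 \<le> d \<Longrightarrow> \<bar>g d x\<bar> < (1 + \<epsilon>) * a d"
        using elim(1) unfolding eventually_sequentially \<epsilon>_def by blast
      obtain N2 where N2: "\<And>d. N2 \<le> d \<Longrightarrow> \<exists>i\<in>{1..d}. (1 - \<epsilon>) * a d \<le> \<bar>g i x\<bar>"
        using elim(2) unfolding eventually_sequentially \<epsilon>_def by blast
      define C where "C = (\<Sum>i\<le>N1. \<bar>g i x\<bar>)"
      have C: "\<bar>g i x\<bar> \<le> C" if "i \<le> N1" for i
        unfolding C_def using that by (intro member_le_sum) auto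
      obtain N3 where N3: "\<And>d. N3 \<le> d \<Longrightarrow> max C 1 \<le> a d"
        using ainf unfolding filterlim_at_top eventually_sequentially by blast
      show "\<exists>N. \<forall>d\<ge>N. norm (Max ((\<lambda>i. \<bar>g i x\<bar>) ` {1..d}) / (s * sqrt (2 * ln (real d))) - 1) < r"
      proof (intro exI[of _ "max (max N1 N2) (max N3 1)"] allI impI)
        fix d assume d: "max (max N1 N2) (max N3 1) \<le> d"
        have d1: "1 \<le> d" and dN1: "N1 \<le> d" and dN2: "N2 \<le> d" and dN3: "N3 \<le> d" using d by auto
        have apos: "0 < a d" using N3[OF dN3] by linarith
        have fin: "finite ((\<lambda>i. \<bar>g i x\<bar>) ` {1..d})" "(\<lambda>i. \<bar>g i x\<bar>) ` {1..d} \<noteq> {}" using d1 by auto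
        define Mx where "Mx = Max ((\<lambda>i. \<bar>g i x\<bar>) ` {1..d})"
        have up: "Mx \<le> (1 + \<epsilon>) * a d"
          unfolding Mx_def
        proof (subst Max_le_iff[OF fin], safe)
          fix i assume i: "i \<in> {1..d}"
          show "\<bar>g i x\<bar> \<le> (1 + \<epsilon>) * a d"
          proof (cases "N1 \<le> i")
            case True
            have "\<bar>g i x\<bar> < (1 + \<epsilon>) * a i" by (rule N1[OF True])
            also have "\<dots> \<le> (1 + \<epsilon>) * a d" using amono[of i d] i \<epsilon>0 by (intro mult_left_mono) auto
            finally show ?thesis by simp
          next
            case False
            then have "\<bar>g i x\<bar> \<le> C" using C by simp
            also have "C \<le> a d" using N3[OF dN3] by simp
            also have "a d \<le> (1 + \<epsilon>) * a d" using apos \<epsilon>0 by simp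
            finally show ?thesis .
          qed
        qed
        obtain i where i: "i \<in> {1..d}" "(1 - \<epsilon>) * a d \<le> \<bar>g i x\<bar>" using N2[OF dN2] by blast
        have lo: "(1 - \<epsilon>) * a d \<le> Mx"
          unfolding Mx_def using i fin by (intro order_trans[OF i(2)] Max_ge) auto
        have "1 - \<epsilon> \<le> Mx / a d" using lo apos by (simp add: pos_le_divide_eq)
        moreover have "Mx / a d \<le> 1 + \<epsilon>" using up apos by (simp add: pos_divide_le_eq)
        ultimately have "\<bar>Mx / a d - 1\<bar> \<le> \<epsilon>" by linarith
        then show "norm (Max ((\<lambda>i. \<bar>g i x\<bar>) ` {1..d}) / (s * sqrt (2 * ln (real d))) - 1) < r"
          using j unfolding Mx_def \<epsilon>_def a_def by simp
      qed
    qed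
  qed
qed

end

lemma lq_norm_scale:
  fixes v :: "nat \<Rightarrow> real" and c r :: real
  assumes c: "c > 0" and r: "r > 0"
  shows "lq_norm r d (\<lambda>i. v i / c) = lq_norm r d v / c"
proof -
  have "(\<Sum>i=1..d. \<bar>v i / c\<bar> powr r) = (\<Sum>i=1..d. \<bar>v i\<bar> powr r) / c powr r"
    using c by (simp add: abs_divide powr_divide sum_divide_distrib)
  then have "lq_norm r d (\<lambda>i. v i / c) = ((\<Sum>i=1..d. \<bar>v i\<bar> powr r) / c powr r) powr (1 / r)"
    by (simp add: lq_norm_def)
  also have "\<dots> = (\<Sum>i=1..d. \<bar>v i\<bar> powr r) powr (1 / r) / (c powr r) powr (1 / r)"
    by (rule powr_divide)
  also have "(c powr r) powr (1 / r) = c"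
    using c r by (simp add: powr_powr)
  finally show ?thesis by (simp add: lq_norm_def)
qed

lemma linf_norm_scale:
  fixes v :: "nat \<Rightarrow> real" and c :: real
  assumes c: "c > 0" and d: "1 \<le> d"
  shows "linf_norm d (\<lambda>i. v i / c) = linf_norm d v / c"
proof -
  have img: "(\<lambda>i. \<bar>v i / c\<bar>) ` {1..d} = (\<lambda>y. y / c) ` ((\<lambda>i. \<bar>v i\<bar>) ` {1..d})"
    using c by (auto simp: abs_divide image_image)
  have "mono (\<lambda>y::real. y / c)" using c by (auto intro!: monoI divide_right_mono)
  then have "Max ((\<lambda>y. y / c) ` ((\<lambda>i. \<bar>v i\<bar>) ` {1..d})) = Max ((\<lambda>i. \<bar>v i\<bar>) ` {1..d}) / c"
    using d by (intro mono_Max_commute[symmetric]) auto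
  then show ?thesis unfolding linf_norm_def img .
qed

lemma lq_norm_2_pos_unit:
  fixes v :: "nat \<Rightarrow> real"
  assumes "lq_norm 2 d v > 0"
  shows "lq_norm 2 d (unit_dir d v) = 1"
  using lq_norm_scale[OF assms, of 2 d v] assms unfolding unit_dir_def by simp

lemma Gamma_three_halves: "Gamma (3 / 2 :: real) = sqrt pi / 2"
proof -
  have "(1/2::real) \<notin> \<int>\<^sub>\<le>\<^sub>0" by (auto dest: nonpos_Ints_nonpos)
  then have "Gamma (1/2 + 1 :: real) = 1/2 * Gamma (1/2)" by (rule Gamma_plus1)
  then show ?thesis by (simp add: Gamma_one_half_real)
qed

context prob_space begin

lemma slln_abs_powr:
  fixes g :: "nat \<Rightarrow> 'a \<Rightarrow> real" and s q :: real
  assumes s: "s > 0" and q: "q > 0"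
    and ind: "indep_vars (\<lambda>_. borel) g {1..}"
    and D: "\<And>i. i \<ge> 1 \<Longrightarrow> distributed M lborel (g i) (normal_density 0 s)"
  shows "AE x in M. (\<lambda>n. (\<Sum>i=1..n. \<bar>g i x\<bar> powr q) / real n) \<longlonglongrightarrow>
           s powr q * 2 powr (q / 2) * Gamma ((q + 1) / 2) / sqrt pi"
proof (rule slln_nonneg)
  show "indep_vars (\<lambda>_. borel) (\<lambda>i x. \<bar>g i x\<bar> powr q) {1..}"
    by (rule indep_vars_compose2[OF ind]) measurable
  show "0 \<le> \<bar>g i x\<bar> powr q" for i x by simp
  have sqeq: "(\<lambda>x. (\<bar>g i x\<bar> powr q)\<^sup>2) = (\<lambda>x. \<bar>g i x\<bar> powr (2 * q))" for i
    by (simp only: power2_eq_square powr_add[symmetric] mult_2)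
  have int: "integrable M (\<lambda>x. \<bar>g i x\<bar> powr r)" if "1 \<le> i" "r > 0" for i r
    using distributed_integrable[OF D[OF that(1)], of "\<lambda>y. \<bar>y\<bar> powr r"] normal_abs_moment(1)[OF s that(2)]
    by simp
  have ex: "expectation (\<lambda>x. \<bar>g i x\<bar> powr r) = s powr r * 2 powr (r / 2) * Gamma ((r + 1) / 2) / sqrt pi"
    if "1 \<le> i" "r > 0" for i r
    using distributed_integral[OF D[OF that(1)], of "\<lambda>y. \<bar>y\<bar> powr r"] normal_abs_moment(2)[OF s that(2)]
    by simp
  show "integrable M (\<lambda>x. (\<bar>g i x\<bar> powr q)\<^sup>2)" if "1 \<le> i" for i
    unfolding sqeq using int[OF that, of "2 * q"] q by simp
  show "expectation (\<lambda>x. \<bar>g i x\<bar> powr q) = s powr q * 2 powr (q / 2) * Gamma ((q + 1) / 2) / sqrt pi"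
    if "1 \<le> i" for i using ex[OF that q] .
  show "expectation (\<lambda>x. (\<bar>g i x\<bar> powr q)\<^sup>2) = s powr (2 * q) * 2 powr ((2 * q) / 2) * Gamma ((2 * q + 1) / 2) / sqrt pi"
    if "1 \<le> i" for i unfolding sqeq using ex[OF that, of "2 * q"] q by simp
qed

end

lemma claim1_alg:
  fixes d A c p r :: real
  assumes d: "d > 0" and c: "c > 0" and pr: "1 / r = 1 - 1 / p"
  shows "d powr (1 / p) * (A / c) / sqrt d = (A / d powr (1 / r)) / (c / sqrt d)"
proof -
  define P where "P = d powr (1 / p)"
  define Q where "Q = d powr (1 / r)"
  define t where "t = sqrt d"
  have PQ: "P * Q = t * t"
  proof -
    have "P * Q = d powr (1 / p + 1 / r)" unfolding P_def Q_def by (simp add: powr_add)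
    also have "1 / p + 1 / r = 1" using pr by simp
    finally show ?thesis using d by (simp add: t_def)
  qed
  have pos: "P > 0" "Q > 0" "t > 0" using d by (auto simp: P_def Q_def t_def)
  have "P * (A / c) / t = P * A * Q / (c * t * Q)" using pos c by (simp add: field_simps)
  also have "\<dots> = A * (P * Q) / (c * t * Q)" by (simp add: mult_ac)
  also have "\<dots> = A * t / (c * Q)" unfolding PQ using pos c by (simp add: field_simps)
  also have "\<dots> = (A / Q) / (c / t)" using pos c by (simp add: field_simps)
  finally show ?thesis unfolding P_def Q_def t_def .
qed

lemma claim2_alg:
  fixes d A c :: real
  assumes d: "d > 0"
  shows "(A / c) / sqrt d = (A / d) / (c / sqrt d)"
proof -
  define t where "t = sqrt d"
  have t: "t > 0" using d by (simp add: t_def)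
  have dd: "d = t * t" using d by (simp add: t_def)
  show ?thesis unfolding t_def[symmetric] by (subst dd) (use t in \<open>simp add: field_simps\<close>)
qed

lemma claim3_alg:
  fixes d Mx c s :: real
  assumes d: "d > 1" and c: "c > 0" and s: "s > 0"
  shows "d * (Mx / c) / sqrt (2 * d * ln d) = (Mx / (s * sqrt (2 * ln d))) * (s / (c / sqrt d))"
proof -
  have l: "ln d > 0" using d by simp
  define t where "t = sqrt d"
  define w where "w = sqrt (2 * ln d)"
  have pos: "t > 0" "w > 0" using d l by (auto simp: t_def w_def)
  have dd: "d = t * t" using d by (simp add: t_def)
  have sw: "sqrt (2 * d * ln d) = t * w" unfolding t_def w_def by (simp add: real_sqrt_mult[symmetric] mult_ac)
  show ?thesis unfolding sw unfolding t_def[symmetric] w_def[symmetric]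
    by (subst (1) dd) (use pos c s in \<open>simp add: field_simps\<close>)
qed

lemma final_const:
  fixes p s :: real
  assumes p: "p > 1" and s: "s > 0"
  defines "r \<equiv> p / (p - 1)"
  shows "(s powr r * 2 powr (r / 2) * Gamma ((r + 1) / 2) / sqrt pi) powr (1 / r) / s =
         sqrt 2 * (Gamma ((2 * p - 1) / (2 * (p - 1))) / sqrt pi) powr (1 - 1 / p)"
proof -
  have r0: "r > 0" using p by (simp add: r_def)
  have ir: "1 / r = 1 - 1 / p" using p by (simp add: r_def field_simps)
  have rg: "(r + 1) / 2 = (2 * p - 1) / (2 * (p - 1))" using p by (simp add: r_def field_simps)
  define G where "G = Gamma ((r + 1) / 2) / sqrt pi"
  have G0: "G > 0" unfolding G_def using r0 by (intro divide_pos_pos Gamma_real_pos) auto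
  have "s powr r * 2 powr (r / 2) * Gamma ((r + 1) / 2) / sqrt pi = s powr r * 2 powr (r / 2) * G"
    by (simp add: G_def)
  also have "(s powr r * 2 powr (r / 2) * G) powr (1 / r) =
      (s powr r) powr (1 / r) * (2 powr (r / 2)) powr (1 / r) * G powr (1 / r)"
    using G0 by (simp add: powr_mult)
  also have "(s powr r) powr (1 / r) = s" using s r0 by (simp add: powr_powr)
  also have "(2 powr (r / 2)) powr (1 / r) = sqrt 2" using r0 by (simp add: powr_powr powr_half_sqrt)
  finally show ?thesis using s unfolding G_def ir rg by simp
qed

theorem proposition1:
  fixes M :: "'a measure" and g :: "nat \<Rightarrow> 'a \<Rightarrow> real" and \<sigma> :: real
  assumes "prob_space M"
    and "\<sigma> > 0"
    and "prob_space.indep_vars M (\<lambda>_. borel) g {1..}"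
    and "\<And>i. i \<ge> 1 \<Longrightarrow> distributed M lborel (g i) (normal_density 0 \<sigma>)"
  shows
    "(\<forall>p::real. p > 1 \<longrightarrow>
       (let p' = p / (p - 1) in
        AE \<omega> in M. ((\<lambda>d. real d powr (1 / p) *
              (lq_norm p' d (unit_dir d (\<lambda>i. g i \<omega>)) / lq_norm 2 d (unit_dir d (\<lambda>i. g i \<omega>)))
              / sqrt (real d))
          \<longlonglongrightarrow> sqrt 2 * (Gamma ((2 * p - 1) / (2 * (p - 1))) / sqrt pi) powr (1 - 1 / p))))
   \<and> (AE \<omega> in M. ((\<lambda>d. (lq_norm 1 d (unit_dir d (\<lambda>i. g i \<omega>)) / lq_norm 2 d (unit_dir d (\<lambda>i. g i \<omega>)))
              / sqrt (real d))
          \<longlonglongrightarrow> sqrt 2 * Gamma 1 / sqrt pi))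
   \<and> (AE \<omega> in M. ((\<lambda>d. real d * (linf_norm d (unit_dir d (\<lambda>i. g i \<omega>)) / lq_norm 2 d (unit_dir d (\<lambda>i. g i \<omega>)))
              / sqrt (2 * real d * ln (real d)))
          \<longlonglongrightarrow> 1))"
proof -
  interpret prob_space M by fact
  have s: "\<sigma> > 0" by fact
  note ind = assms(3) and D = assms(4)
  define S where "S = (\<lambda>r d x. \<Sum>i=1..d. \<bar>g i x\<bar> powr r)"
  define m where "m = (\<lambda>q::real. \<sigma> powr q * 2 powr (q / 2) * Gamma ((q + 1) / 2) / sqrt pi)"
  have SL: "AE x in M. (\<lambda>d. S r d x / real d) \<longlonglongrightarrow> m r" if "r > 0" for r
    using slln_abs_powr[OF s that ind D] unfolding S_def m_def .
  have SL2: "AE x in M. (\<lambda>d. S 2 d x / real d) \<longlonglongrightarrow> m 2" using SL[of 2] by simp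
  have m2: "m 2 = \<sigma>\<^sup>2"
    unfolding m_def using s by (simp add: Gamma_three_halves powr_numeral)
  have mpos: "m r > 0" if "r > 0" for r
    unfolding m_def using s that by (intro divide_pos_pos mult_pos_pos Gamma_real_pos) auto
  have S0: "0 \<le> S r d x" for r d x unfolding S_def by (intro sum_nonneg) auto
  have lqS: "lq_norm r d (\<lambda>i. g i x) = (S r d x) powr (1 / r)" for r d x
    by (simp add: lq_norm_def S_def)
  have GEN: "AE x in M. (\<lambda>d. (S r d x / real d) powr (1 / r) / sqrt (S 2 d x / real d)) \<longlonglongrightarrow> m r powr (1 / r) / \<sigma>"
    if r: "r > 0" for r
    using SL[OF r] SL2
  proof eventually_elim
    case (elim x)
    have "(\<lambda>d. (S r d x / real d) powr (1 / r) / sqrt (S 2 d x / real d)) \<longlonglongrightarrow> m r powr (1 / r) / sqrt (m 2)"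
      using mpos[OF r] mpos[of 2] by (intro tendsto_divide tendsto_powr elim tendsto_real_sqrt tendsto_const) auto
    then show ?case using m2 s by simp
  qed
  have POS: "AE x in M. eventually (\<lambda>d. 0 < S 2 d x \<and> 1 \<le> d) sequentially"
    using SL2
  proof eventually_elim
    case (elim x)
    have "eventually (\<lambda>d. 0 < S 2 d x / real d) sequentially"
      using order_tendstoD(1)[OF elim mpos[of 2]] by simp
    then show ?case using eventually_ge_at_top[of "1::nat"]
      by eventually_elim (auto simp: zero_less_divide_iff)
  qed
  have KEY: "lq_norm r d (unit_dir d (\<lambda>i. g i x)) / lq_norm 2 d (unit_dir d (\<lambda>i. g i x)) =
      (S r d x) powr (1 / r) / sqrt (S 2 d x)"
    and KEYinf: "linf_norm d (unit_dir d (\<lambda>i. g i x)) / lq_norm 2 d (unit_dir d (\<lambda>i. g i x)) =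
      Max ((\<lambda>i. \<bar>g i x\<bar>) ` {1..d}) / sqrt (S 2 d x)"
    if SP: "0 < S 2 d x" and d1: "1 \<le> d" and r: "r > 0" for r d x
  proof -
    define c where "c = lq_norm 2 d (\<lambda>i. g i x)"
    have cS: "c = sqrt (S 2 d x)" unfolding c_def lqS using SP by (simp add: powr_half_sqrt)
    have c0: "c > 0" using cS SP by simp
    have u: "unit_dir d (\<lambda>i. g i x) = (\<lambda>i. g i x / c)" by (simp add: unit_dir_def c_def)
    have one: "lq_norm 2 d (unit_dir d (\<lambda>i. g i x)) = 1"
      unfolding u using lq_norm_scale[OF c0, of 2 d "\<lambda>i. g i x"] c0 by (simp add: c_def[symmetric])
    show "lq_norm r d (unit_dir d (\<lambda>i. g i x)) / lq_norm 2 d (unit_dir d (\<lambda>i. g i x)) =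
      (S r d x) powr (1 / r) / sqrt (S 2 d x)"
      unfolding one using lq_norm_scale[OF c0 r, of d "\<lambda>i. g i x"] unfolding u lqS cS by simp
    show "linf_norm d (unit_dir d (\<lambda>i. g i x)) / lq_norm 2 d (unit_dir d (\<lambda>i. g i x)) =
      Max ((\<lambda>i. \<bar>g i x\<bar>) ` {1..d}) / sqrt (S 2 d x)"
      unfolding one using linf_norm_scale[OF c0 d1, of "\<lambda>i. g i x"] unfolding u cS linf_norm_def by simp
  qed
  have C1: "AE \<omega> in M. ((\<lambda>d. real d powr (1 / p) *
              (lq_norm (p / (p - 1)) d (unit_dir d (\<lambda>i. g i \<omega>)) / lq_norm 2 d (unit_dir d (\<lambda>i. g i \<omega>)))
              / sqrt (real d))
          \<longlonglongrightarrow> sqrt 2 * (Gamma ((2 * p - 1) / (2 * (p - 1))) / sqrt pi) powr (1 - 1 / p))"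
    if p: "p > 1" for p
  proof -
    define r where "r = p / (p - 1)"
    have r0: "r > 0" using p by (simp add: r_def)
    have ir: "1 / r = 1 - 1 / p" using p by (simp add: r_def field_simps)
    have tgt: "m r powr (1 / r) / \<sigma> = sqrt 2 * (Gamma ((2 * p - 1) / (2 * (p - 1))) / sqrt pi) powr (1 - 1 / p)"
      unfolding m_def r_def by (rule final_const[OF p s])
    show ?thesis
      using GEN[OF r0] POS
    proof eventually_elim
      case (elim x)
      have ev: "eventually (\<lambda>d. (S r d x / real d) powr (1 / r) / sqrt (S 2 d x / real d) =
          real d powr (1 / p) * (lq_norm (p / (p - 1)) d (unit_dir d (\<lambda>i. g i x)) / lq_norm 2 d (unit_dir d (\<lambda>i. g i x)))
              / sqrt (real d)) sequentially"
        using elim(2)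
      proof eventually_elim
        case (elim d)
        have d0: "real d > 0" using elim by simp
        have "real d powr (1 / p) * (lq_norm (p / (p - 1)) d (unit_dir d (\<lambda>i. g i x)) / lq_norm 2 d (unit_dir d (\<lambda>i. g i x)))
              / sqrt (real d) = real d powr (1 / p) * ((S r d x) powr (1 / r) / sqrt (S 2 d x)) / sqrt (real d)"
          using KEY[of d x r] elim r0 by (simp add: r_def)
        also have "\<dots> = ((S r d x) powr (1 / r) / real d powr (1 / r)) / (sqrt (S 2 d x) / sqrt (real d))"
          using elim by (intro claim1_alg d0 ir) simp
        also have "\<dots> = (S r d x / real d) powr (1 / r) / sqrt (S 2 d x / real d)"
          by (simp add: powr_divide real_sqrt_divide)
        finally show ?case by simp
      qed
      show ?case using tendsto_cong[OF ev] elim(1) tgt by simp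
    qed
  qed
  have C2: "AE \<omega> in M. ((\<lambda>d. (lq_norm 1 d (unit_dir d (\<lambda>i. g i \<omega>)) / lq_norm 2 d (unit_dir d (\<lambda>i. g i \<omega>)))
              / sqrt (real d))
          \<longlonglongrightarrow> sqrt 2 * Gamma 1 / sqrt pi)"
  proof -
    have tgt: "m 1 powr (1 / 1) / \<sigma> = sqrt 2 * Gamma 1 / sqrt pi"
      unfolding m_def using s by (simp add: powr_half_sqrt mpos)
    show ?thesis
      using GEN[OF zero_less_one] POS
    proof eventually_elim
      case (elim x)
      have ev: "eventually (\<lambda>d. (S 1 d x / real d) powr (1 / 1) / sqrt (S 2 d x / real d) =
          (lq_norm 1 d (unit_dir d (\<lambda>i. g i x)) / lq_norm 2 d (unit_dir d (\<lambda>i. g i x))) / sqrt (real d)) sequentially"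
        using elim(2)
      proof eventually_elim
        case (elim d)
        have d0: "real d > 0" using elim by simp
        have "(lq_norm 1 d (unit_dir d (\<lambda>i. g i x)) / lq_norm 2 d (unit_dir d (\<lambda>i. g i x))) / sqrt (real d)
            = ((S 1 d x) powr (1 / 1) / sqrt (S 2 d x)) / sqrt (real d)"
          using KEY[of d x 1] elim by simp
        also have "\<dots> = (S 1 d x / real d) powr (1 / 1) / sqrt (S 2 d x / real d)"
          using d0 S0[of 1 d x] claim2_alg[OF d0, of "S 1 d x" "sqrt (S 2 d x)"]
          by (simp add: real_sqrt_divide)
        finally show ?case by simp
      qed
      show ?case using tendsto_cong[OF ev] elim(1) tgt by simp
    qed
  qed
  have MXL: "AE x in M. (\<lambda>d. Max ((\<lambda>i. \<bar>g i x\<bar>) ` {1..d}) / (\<sigma> * sqrt (2 * ln (real d)))) \<longlonglongrightarrow> 1"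
    by (rule max_limit[OF s ind]) (rule D)
  have C3: "AE \<omega> in M. ((\<lambda>d. real d * (linf_norm d (unit_dir d (\<lambda>i. g i \<omega>)) / lq_norm 2 d (unit_dir d (\<lambda>i. g i \<omega>)))
              / sqrt (2 * real d * ln (real d)))
          \<longlonglongrightarrow> 1)"
    using MXL SL2 POS
  proof eventually_elim
    case (elim x)
    have lim2: "(\<lambda>d. \<sigma> / sqrt (S 2 d x / real d)) \<longlonglongrightarrow> \<sigma> / sqrt (m 2)"
      using mpos[of 2] by (intro tendsto_divide tendsto_const tendsto_real_sqrt elim(2)) auto
    have lim: "(\<lambda>d. (Max ((\<lambda>i. \<bar>g i x\<bar>) ` {1..d}) / (\<sigma> * sqrt (2 * ln (real d)))) *
                    (\<sigma> / sqrt (S 2 d x / real d))) \<longlonglongrightarrow> 1 * 1"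
      using tendsto_mult[OF elim(1) lim2] m2 s by simp
    have ev: "eventually (\<lambda>d. (Max ((\<lambda>i. \<bar>g i x\<bar>) ` {1..d}) / (\<sigma> * sqrt (2 * ln (real d)))) *
                    (\<sigma> / sqrt (S 2 d x / real d)) =
        real d * (linf_norm d (unit_dir d (\<lambda>i. g i x)) / lq_norm 2 d (unit_dir d (\<lambda>i. g i x)))
              / sqrt (2 * real d * ln (real d))) sequentially"
      using elim(3) eventually_ge_at_top[of "2::nat"]
    proof eventually_elim
      case (elim d)
      have d1: "real d > 1" using elim by simp
      have "real d * (linf_norm d (unit_dir d (\<lambda>i. g i x)) / lq_norm 2 d (unit_dir d (\<lambda>i. g i x)))
              / sqrt (2 * real d * ln (real d)) =
            real d * (Max ((\<lambda>i. \<bar>g i x\<bar>) ` {1..d}) / sqrt (S 2 d x)) / sqrt (2 * real d * ln (real d))"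
        using KEYinf[of d x 1] elim by simp
      also have "\<dots> = (Max ((\<lambda>i. \<bar>g i x\<bar>) ` {1..d}) / (\<sigma> * sqrt (2 * ln (real d)))) *
                    (\<sigma> / (sqrt (S 2 d x) / sqrt (real d)))"
        using elim by (intro claim3_alg d1 s) simp
      also have "\<dots> = (Max ((\<lambda>i. \<bar>g i x\<bar>) ` {1..d}) / (\<sigma> * sqrt (2 * ln (real d)))) *
                    (\<sigma> / sqrt (S 2 d x / real d))"
        by (simp add: real_sqrt_divide)
      finally show ?case by simp
    qed
    show ?case using tendsto_cong[OF ev] lim by simp
  qed
  show ?thesis using C1 C2 C3 by (simp add: Let_def)
qed


end
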